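(* Let $S=K[x_1,\dots,x_n]$, let $I\subset S$ be an ideal generated by monomials of degree $\le d$, $R=S/I$, and let $c\ge1$ be an integer with $c\ge d-1$. Let $X$ be the set of residue classes in $R$ of the monomials of degree $c$ not in $I$ (a basis of $(R^{(c)})_1$) and $\mathcal F=\{(Y):Y\subseteq X\}$, a Koszul filtration of $R^{(c)}$. Then for every $u=0,\dots,c-1$ the Veronese module $V_u=\bigoplus_jR_{u+jc}$ has linear quotients with respect to $\mathcal F$ (in particular $V_u$ has a linear resolution over $R^{(c)}$).
   Context: $R^{(c)}=\bigoplus_jR_{jc}$ is standard graded with $R_{jc}$ in degree $j$, and $V_u$ is the graded $R^{(c)}$-module with degree-$j$ component $R_{u+jc}$. A Koszul filtration of a standard graded algebra $A$ is a set $\mathcal F$ of ideals such that: (i) each $I\in\mathcal F$ is generated in degree $1$; (ii) $0,\mathfrak m_A\in\mathcal F$; (iii) for every $I\in\mathcal F$, $I\ne0$, there is $J\in\mathcal F$ with $J\subset I$, $I/J$ cyclic and $J:I\in\mathcal F$. A module $M$ has linear quotients with respect to $\mathcal F$ if it is minimally generated by homogeneous $m_1,\dots,m_v$ with $\langle m_1,\dots,m_{i-1}\rangle:_Am_i\in\mathcal F$ for all $i$. A module generated in a single degree $e$ has a linear resolution if its regularity $\sup_i\{t_i^A(M)-i\}$ equals $e$, where $t_i^A(M)=\sup\{j:\operatorname{Tor}_i^A(M,K)_j\neq0\}$. *)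

theory Defs
  imports "HOL-Library.Poly_Mapping"
begin

text \<open>Polynomial ring S = K[x_v : v in 'v] ('v finite, n = CARD('v)) modelled as
  finitely supported functions from monomials (exponent vectors 'v =>0 nat) to K.\<close>

type_synonym ('v, 'k) mpoly = "('v \<Rightarrow>\<^sub>0 nat) \<Rightarrow>\<^sub>0 'k"

definition mdeg :: "('v \<Rightarrow>\<^sub>0 nat) \<Rightarrow> nat" where
  "mdeg m = (\<Sum>v\<in>Poly_Mapping.keys m. Poly_Mapping.lookup m v)"

definition mon :: "('v \<Rightarrow>\<^sub>0 nat) \<Rightarrow> ('v, 'k::field) mpoly" where
  "mon m = Poly_Mapping.single m 1"

text \<open>A-linear span of B inside S: finite combinations with coefficients in A.
  With A = UNIV this is the ideal of S generated by B.\<close>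
definition lin_span :: "('v, 'k::field) mpoly set \<Rightarrow> ('v, 'k) mpoly set \<Rightarrow> ('v, 'k) mpoly set" where
  "lin_span A B = {x. \<exists>F c. finite F \<and> F \<subseteq> B \<and> (\<forall>b\<in>F. c b \<in> A) \<and> x = (\<Sum>b\<in>F. c b * b)}"

definition set_plus_mp :: "('v, 'k::field) mpoly set \<Rightarrow> ('v, 'k) mpoly set \<Rightarrow> ('v, 'k) mpoly set" where
  "set_plus_mp A B = {a + b | a b. a \<in> A \<and> b \<in> B}"

definition homogeneous :: "nat \<Rightarrow> ('v, 'k::field) mpoly \<Rightarrow> bool" where
  "homogeneous e f \<longleftrightarrow> (\<forall>m\<in>Poly_Mapping.keys f. mdeg m = e)"

text \<open>For c \<ge> 1: veronese_part c 0 represents S^(c) (hence R^(c) modulo I), and for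
  u < c, veronese_part c u represents the Veronese module V_u (modulo I).\<close>
definition veronese_part :: "nat \<Rightarrow> nat \<Rightarrow> ('v, 'k::field) mpoly set" where
  "veronese_part c u = {f. \<forall>m\<in>Poly_Mapping.keys f. mdeg m mod c = u}"

text \<open>Residue classes in R = S/I are represented by polynomials; a set of
  representatives of an ideal / submodule of R is saturated by adding I.
  R^(c)-submodule of R generated by B (plus I): \<close>
definition vspan :: "nat \<Rightarrow> ('v, 'k::field) mpoly set \<Rightarrow> ('v, 'k) mpoly set \<Rightarrow> ('v, 'k) mpoly set" where
  "vspan c I B = set_plus_mp (lin_span (veronese_part c 0) B) I"

text \<open>Colon ideal <ms_0,...,ms_{i-1}> :_{R^(c)} ms_i, as representatives in S^(c).\<close>
definition colon_rep :: "nat \<Rightarrow> ('v, 'k::field) mpoly set \<Rightarrow> ('v, 'k) mpoly list \<Rightarrow> nat \<Rightarrow> ('v, 'k) mpoly set" where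
  "colon_rep c I ms i = {r \<in> veronese_part c 0. r * ms ! i \<in> vspan c I (set (take i ms))}"

definition ideal_rep :: "nat \<Rightarrow> ('v, 'k::field) mpoly set \<Rightarrow> ('v, 'k) mpoly set \<Rightarrow> ('v, 'k) mpoly set" where
  "ideal_rep c I Y = {r \<in> veronese_part c 0. r \<in> vspan c I Y}"

definition Xset :: "nat \<Rightarrow> ('v, 'k::field) mpoly set \<Rightarrow> ('v, 'k) mpoly set" where
  "Xset c I = {mon m | m. mdeg m = c \<and> mon m \<notin> I}"

definition minimal_hom_generators ::
  "nat \<Rightarrow> nat \<Rightarrow> ('v, 'k::field) mpoly set \<Rightarrow> ('v, 'k) mpoly list \<Rightarrow> bool" where
  "minimal_hom_generators c u I ms \<longleftrightarrow>
     (\<forall>g\<in>set ms. (\<exists>e. homogeneous e g) \<and> g \<in> veronese_part c u) \<and>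
     veronese_part c u \<subseteq> vspan c I (set ms) \<and>
     (\<forall>i<length ms. \<not> veronese_part c u \<subseteq> vspan c I {ms ! j | j. j < length ms \<and> j \<noteq> i})"

definition veronese_linear_quotients :: "nat \<Rightarrow> nat \<Rightarrow> ('v, 'k::field) mpoly set \<Rightarrow> bool" where
  "veronese_linear_quotients c u I \<longleftrightarrow>
     (\<exists>ms. minimal_hom_generators c u I ms \<and>
        (\<forall>i<length ms. \<exists>Y\<subseteq>Xset c I. colon_rep c I ms i = ideal_rep c I Y))"

end

theory Submission
  imports Defs "HOL-Library.FuncSet"
begin


definition pset :: "('v \<Rightarrow>\<^sub>0 nat) set \<Rightarrow> ('v, 'k::field) mpoly set" where
  "pset E = {f. Poly_Mapping.keys f \<subseteq> E}"

lemma expand_pm: "(f::'a \<Rightarrow>\<^sub>0 'b::comm_monoid_add) = (\<Sum>k\<in>Poly_Mapping.keys f. Poly_Mapping.single k (Poly_Mapping.lookup f k))"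
  by (rule poly_mapping_eqI) (simp add: lookup_sum lookup_single when_def in_keys_iff)

lemma lookup_mult_mon: "Poly_Mapping.lookup ((r::('v, 'k::field) mpoly) * mon m) (k + m) = Poly_Mapping.lookup r k"
proof -
  have "r * mon m = (\<Sum>k'\<in>Poly_Mapping.keys r. Poly_Mapping.single k' (Poly_Mapping.lookup r k') * Poly_Mapping.single m 1)"
    unfolding mon_def by (subst expand_pm[of r]) (simp add: sum_distrib_right)
  also have "\<dots> = (\<Sum>k'\<in>Poly_Mapping.keys r. Poly_Mapping.single (k' + m) (Poly_Mapping.lookup r k'))"
    by (simp add: mult_single)
  finally have "Poly_Mapping.lookup (r * mon m) (k + m) = (\<Sum>k'\<in>Poly_Mapping.keys r. Poly_Mapping.lookup r k' when k' + m = k + m)"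
    by (simp add: lookup_sum lookup_single)
  also have "\<dots> = (\<Sum>k'\<in>Poly_Mapping.keys r. Poly_Mapping.lookup r k' when k' = k)"
    by simp
  also have "\<dots> = Poly_Mapping.lookup r k"
    by (simp add: when_def in_keys_iff)
  finally show ?thesis .
qed

lemma keys_mult_mon: "Poly_Mapping.keys ((r::('v, 'k::field) mpoly) * mon m) = (\<lambda>k. k + m) ` Poly_Mapping.keys r"
proof
  show "Poly_Mapping.keys (r * mon m) \<subseteq> (\<lambda>k. k + m) ` Poly_Mapping.keys r"
    using keys_mult[of r "mon m"] by (auto simp: mon_def)
  show "(\<lambda>k. k + m) ` Poly_Mapping.keys r \<subseteq> Poly_Mapping.keys (r * mon m)"
    by (auto simp: in_keys_iff lookup_mult_mon)
qed

lemma keys_mon [simp]: "Poly_Mapping.keys (mon m :: ('v, 'k::field) mpoly) = {m}"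
  by (simp add: mon_def)

lemma pset_add: "f \<in> pset E \<Longrightarrow> g \<in> pset E \<Longrightarrow> f + g \<in> pset E"
  using keys_add[of f g] by (auto simp: pset_def)

lemma pset_zero: "0 \<in> pset E" by (simp add: pset_def)

lemma lin_span_zero: "0 \<in> lin_span A B"
  unfolding lin_span_def by (rule CollectI, rule exI[of _ "{}"]) auto

lemma lin_span_add:
  assumes A0: "0 \<in> A" and Aadd: "\<And>x y. x \<in> A \<Longrightarrow> y \<in> A \<Longrightarrow> x + y \<in> A"
    and x: "x \<in> lin_span A B" and y: "y \<in> lin_span A B"
  shows "x + y \<in> lin_span A B"
proof -
  obtain F1 c1 where 1: "finite F1" "F1 \<subseteq> B" "\<forall>b\<in>F1. c1 b \<in> A" "x = (\<Sum>b\<in>F1. c1 b * b)"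
    using x unfolding lin_span_def by blast
  obtain F2 c2 where 2: "finite F2" "F2 \<subseteq> B" "\<forall>b\<in>F2. c2 b \<in> A" "y = (\<Sum>b\<in>F2. c2 b * b)"
    using y unfolding lin_span_def by blast
  define c where "c b = (if b \<in> F1 then c1 b else 0) + (if b \<in> F2 then c2 b else 0)" for b
  have "(\<Sum>b\<in>F1 \<union> F2. c b * b) = (\<Sum>b\<in>F1 \<union> F2. (if b \<in> F1 then c1 b * b else 0))
      + (\<Sum>b\<in>F1 \<union> F2. (if b \<in> F2 then c2 b * b else 0))"
  proof -
    have "c b * b = (if b \<in> F1 then c1 b * b else 0) + (if b \<in> F2 then c2 b * b else 0)" for b
      by (simp add: c_def distrib_right)
    then show ?thesis by (simp add: sum.distrib)
  qed
  also have "\<dots> = x + y"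
  proof -
    have a: "(F1 \<union> F2) \<inter> F1 = F1" "(F1 \<union> F2) \<inter> F2 = F2" by blast+
    have s1: "(\<Sum>b\<in>F1 \<union> F2. if b \<in> F1 then c1 b * b else 0) = x"
      using sum.inter_restrict[of "F1 \<union> F2" "\<lambda>b. c1 b * b" F1, symmetric] 1 2 a by simp
    have s2: "(\<Sum>b\<in>F1 \<union> F2. if b \<in> F2 then c2 b * b else 0) = y"
      using sum.inter_restrict[of "F1 \<union> F2" "\<lambda>b. c2 b * b" F2, symmetric] 1 2 a by simp
    show ?thesis using s1 s2 by simp
  qed
  finally have "x + y = (\<Sum>b\<in>F1 \<union> F2. c b * b)" by simp
  moreover have "\<forall>b\<in>F1 \<union> F2. c b \<in> A"
  proof
    fix b assume "b \<in> F1 \<union> F2"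
    have "(if b \<in> F1 then c1 b else 0) \<in> A" using 1(3) A0 by simp
    moreover have "(if b \<in> F2 then c2 b else 0) \<in> A" using 2(3) A0 by simp
    ultimately show "c b \<in> A" unfolding c_def by (rule Aadd)
  qed
  ultimately show ?thesis unfolding lin_span_def using 1(1,2) 2(1,2)
    by (intro CollectI exI[of _ "F1 \<union> F2"] exI[of _ c]) simp
qed

lemma lin_span_single:
  assumes "a \<in> A" "b \<in> B" shows "a * b \<in> lin_span A B"
  unfolding lin_span_def using assms by (intro CollectI exI[of _ "{b}"] exI[of _ "\<lambda>_. a"]) auto

lemma lin_span_sum:
  assumes A0: "0 \<in> A" and Aadd: "\<And>x y. x \<in> A \<Longrightarrow> y \<in> A \<Longrightarrow> x + y \<in> A"
  shows "finite S \<Longrightarrow> (\<forall>s\<in>S. f s \<in> lin_span A B) \<Longrightarrow> sum f S \<in> lin_span A B"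
  by (induction S rule: finite_induct) (auto intro: lin_span_zero lin_span_add[OF A0 Aadd])

lemma lin_span_pset:
  "lin_span (pset D) (mon ` B) = (pset {k + b | k b. k \<in> D \<and> b \<in> B} :: ('v, 'k::field) mpoly set)"
proof
  show "lin_span (pset D) (mon ` B) \<subseteq> pset {k + b | k b. k \<in> D \<and> b \<in> B}"
  proof
    fix x assume "x \<in> lin_span (pset D) (mon ` B)"
    then obtain F c where F: "finite F" "F \<subseteq> mon ` B" "\<forall>b\<in>F. c b \<in> pset D" "x = (\<Sum>b\<in>F. c b * b)"
      unfolding lin_span_def by blast
    have "Poly_Mapping.keys (c b * b) \<subseteq> {k + b | k b. k \<in> D \<and> b \<in> B}" if "b \<in> F" for b
    proof -
      from that F obtain m where m: "m \<in> B" "b = mon m" by blast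
      show ?thesis using F(3) that m unfolding pset_def by (auto simp: keys_mult_mon)
    qed
    then show "x \<in> pset {k + b | k b. k \<in> D \<and> b \<in> B}"
      using keys_sum[of "\<lambda>b. c b * b" F] F(4) unfolding pset_def by blast
  qed
next
  show "pset {k + b | k b. k \<in> D \<and> b \<in> B} \<subseteq> (lin_span (pset D) (mon ` B) :: ('v, 'k) mpoly set)"
  proof
    fix f :: "('v, 'k) mpoly" assume f: "f \<in> pset {k + b | k b. k \<in> D \<and> b \<in> B}"
    have "Poly_Mapping.single k (Poly_Mapping.lookup f k) \<in> lin_span (pset D) (mon ` B)" if "k \<in> Poly_Mapping.keys f" for k
    proof -
      from that f obtain k' b where kb: "k = k' + b" "k' \<in> D" "b \<in> B" unfolding pset_def by blast
      have "Poly_Mapping.single k (Poly_Mapping.lookup f k) = Poly_Mapping.single k' (Poly_Mapping.lookup f k) * mon b"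
        by (simp add: mon_def mult_single kb)
      moreover have "Poly_Mapping.single k' (Poly_Mapping.lookup f k) \<in> pset D" using kb by (simp add: pset_def)
      ultimately show ?thesis using kb by (simp add: lin_span_single)
    qed
    then have "(\<Sum>k\<in>Poly_Mapping.keys f. Poly_Mapping.single k (Poly_Mapping.lookup f k)) \<in> lin_span (pset D) (mon ` B)"
      by (intro lin_span_sum[OF pset_zero pset_add]) auto
    then show "f \<in> lin_span (pset D) (mon ` B)" using expand_pm[of f] by metis
  qed
qed

lemma keys_sum_single: "Poly_Mapping.keys (\<Sum>k\<in>S. Poly_Mapping.single k (h k)) \<subseteq> S"
proof -
  have "Poly_Mapping.keys (\<Sum>k\<in>S. Poly_Mapping.single k (h k)) \<subseteq> (\<Union>k\<in>S. Poly_Mapping.keys (Poly_Mapping.single k (h k)))"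
    by (rule keys_sum)
  also have "\<dots> \<subseteq> S" by auto
  finally show ?thesis .
qed

lemma set_plus_pset: "set_plus_mp (pset E1) (pset E2) = (pset (E1 \<union> E2) :: ('v, 'k::field) mpoly set)"
proof
  show "set_plus_mp (pset E1) (pset E2) \<subseteq> (pset (E1 \<union> E2) :: ('v, 'k) mpoly set)"
  proof
    fix x :: "('v, 'k) mpoly" assume "x \<in> set_plus_mp (pset E1) (pset E2)"
    then obtain a b where ab: "x = a + b" "a \<in> pset E1" "b \<in> pset E2" unfolding set_plus_mp_def by blast
    show "x \<in> pset (E1 \<union> E2)" using ab keys_add[of a b] unfolding pset_def by auto
  qed
next
  show "pset (E1 \<union> E2) \<subseteq> (set_plus_mp (pset E1) (pset E2) :: ('v, 'k) mpoly set)"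
  proof
    fix f :: "('v, 'k) mpoly" assume f: "f \<in> pset (E1 \<union> E2)"
    define p1 where "p1 = (\<Sum>k\<in>Poly_Mapping.keys f \<inter> E1. Poly_Mapping.single k (Poly_Mapping.lookup f k))"
    define p2 where "p2 = (\<Sum>k\<in>Poly_Mapping.keys f - E1. Poly_Mapping.single k (Poly_Mapping.lookup f k))"
    have "f = (\<Sum>k\<in>Poly_Mapping.keys f. Poly_Mapping.single k (Poly_Mapping.lookup f k))" by (rule expand_pm)
    also have "\<dots> = p1 + p2"
      unfolding p1_def p2_def by (rule sum.Int_Diff[OF finite_keys])
    finally have eq: "f = p1 + p2" .
    have "p1 \<in> pset E1"
      using keys_sum_single[of "\<lambda>k. Poly_Mapping.lookup f k" "Poly_Mapping.keys f \<inter> E1"] unfolding pset_def p1_def by auto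
    moreover have "p2 \<in> pset E2"
      using f keys_sum_single[of "\<lambda>k. Poly_Mapping.lookup f k" "Poly_Mapping.keys f - E1"] unfolding pset_def p2_def by auto
    ultimately show "f \<in> set_plus_mp (pset E1) (pset E2)"
      unfolding set_plus_mp_def using eq by (intro CollectI exI[of _ p1] exI[of _ p2]) simp
  qed
qed



definition dle :: "('v \<Rightarrow>\<^sub>0 nat) \<Rightarrow> ('v \<Rightarrow>\<^sub>0 nat) \<Rightarrow> bool" where
  "dle a b \<longleftrightarrow> (\<forall>v. Poly_Mapping.lookup a v \<le> Poly_Mapping.lookup b v)"

lemma dle_diff: "dle a b \<Longrightarrow> (b - a) + a = b"
  unfolding dle_def by (intro poly_mapping_eqI) (simp add: lookup_add lookup_minus)

lemma dle_add: "dle a (a + k)"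
  unfolding dle_def by (simp add: lookup_add)

lemma dle_trans: "dle a b \<Longrightarrow> dle b c \<Longrightarrow> dle a c"
  unfolding dle_def using order_trans by blast

lemma mdeg_UNIV: "mdeg (m :: 'v::finite \<Rightarrow>\<^sub>0 nat) = (\<Sum>v\<in>UNIV. Poly_Mapping.lookup m v)"
  unfolding mdeg_def by (rule sum.mono_neutral_left) (auto simp: in_keys_iff)

lemma mdeg_add: "mdeg ((a::'v::finite \<Rightarrow>\<^sub>0 nat) + b) = mdeg a + mdeg b"
  by (simp add: mdeg_UNIV lookup_add sum.distrib)

lemma mdeg_single: "mdeg (Poly_Mapping.single (v::'v) (1::nat)) = 1"
  by (simp add: mdeg_def lookup_single)

lemma mdeg_zero [simp]: "mdeg (0 :: 'v \<Rightarrow>\<^sub>0 nat) = 0"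
  by (simp add: mdeg_def lookup_single)

lemma mdeg_eq_0: "mdeg (m :: 'v::finite \<Rightarrow>\<^sub>0 nat) = 0 \<Longrightarrow> m = 0"
  by (intro poly_mapping_eqI) (simp add: mdeg_UNIV)

lemma dle_mdeg: "dle a b \<Longrightarrow> mdeg (a :: 'v::finite \<Rightarrow>\<^sub>0 nat) \<le> mdeg b"
  unfolding dle_def mdeg_UNIV by (rule sum_mono) simp

lemma dle_eq: "dle a b \<Longrightarrow> mdeg (a :: 'v::finite \<Rightarrow>\<^sub>0 nat) = mdeg b \<Longrightarrow> a = b"
proof -
  assume d: "dle a b" and e: "mdeg a = mdeg b"
  have "mdeg (b - a) + mdeg a = mdeg b" using dle_diff[OF d] mdeg_add by metis
  then have "b - a = 0" using e mdeg_eq_0 by simp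
  then show "a = b" using dle_diff[OF d] by simp
qed

lemma exists_between:
  fixes h w :: "'v::finite \<Rightarrow>\<^sub>0 nat"
  shows "dle h w \<Longrightarrow> mdeg h \<le> e \<Longrightarrow> e \<le> mdeg w \<Longrightarrow> \<exists>y. dle h y \<and> dle y w \<and> mdeg y = e"
proof (induction "e - mdeg h" arbitrary: h)
  case 0
  then show ?case by (intro exI[of _ h]) (auto simp: dle_def)
next
  case (Suc n)
  have "h \<noteq> w" using Suc by auto
  then obtain v where v: "Poly_Mapping.lookup h v < Poly_Mapping.lookup w v"
    using Suc(3) unfolding dle_def by (metis le_neq_implies_less poly_mapping_eqI)
  define h' where "h' = h + Poly_Mapping.single v 1"
  have "dle h' w" using Suc(3) v unfolding dle_def h'_def
    by (auto simp: lookup_add lookup_single when_def Suc_le_eq)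
  moreover have "mdeg h' = mdeg h + 1" unfolding h'_def mdeg_add mdeg_single by (rule refl)
  ultimately obtain y where y: "dle h' y" "dle y w" "mdeg y = e"
    using Suc by (metis Suc_diff_Suc Suc_eq_plus1 Suc_le_eq diff_Suc_1 zero_less_Suc zero_less_diff)
  have "dle h h'" unfolding h'_def by (rule dle_add)
  then show ?case using y dle_trans by blast
qed


definition psi :: "('v \<Rightarrow> nat) \<Rightarrow> ('v \<Rightarrow>\<^sub>0 nat) \<Rightarrow> nat" where
  "psi \<omega> m = (\<Sum>v\<in>UNIV. Poly_Mapping.lookup m v * \<omega> v)"

lemma psi_add: "psi \<omega> ((a :: 'v::finite \<Rightarrow>\<^sub>0 nat) + b) = psi \<omega> a + psi \<omega> b"
  by (simp add: psi_def lookup_add sum.distrib distrib_right)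

lemma psi_single: "psi \<omega> (Poly_Mapping.single (v :: 'v::finite) 1) = \<omega> v"
proof -
  have "psi \<omega> (Poly_Mapping.single v 1) = (\<Sum>x\<in>UNIV. (if x = v then \<omega> v else 0))"
    unfolding psi_def by (rule sum.cong) (auto simp: lookup_single when_def)
  also have "\<dots> = \<omega> v" by simp
  finally show ?thesis .
qed

lemma key_exchange:
  fixes a b :: "'v::finite \<Rightarrow>\<^sub>0 nat"
  assumes inj: "inj \<omega>" and deg: "mdeg a = mdeg b" and ne: "a \<noteq> b" and le: "psi \<omega> b \<le> psi \<omega> a"
  shows "\<exists>t s. Poly_Mapping.lookup b t < Poly_Mapping.lookup a t \<and>
    Poly_Mapping.lookup a s < Poly_Mapping.lookup b s \<and> \<omega> s < \<omega> t"
proof (rule ccontr)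
  assume H: "\<not> ?thesis"
  define P where "P = {v. Poly_Mapping.lookup b v < Poly_Mapping.lookup a v}"
  define N where "N = {v. Poly_Mapping.lookup a v < Poly_Mapping.lookup b v}"
  have "N \<noteq> {}"
  proof
    assume "N = {}"
    then have "dle b a" unfolding dle_def N_def by (auto simp: not_less)
    then show False using dle_eq deg ne by metis
  qed
  have "P \<noteq> {}"
  proof
    assume "P = {}"
    then have "dle a b" unfolding dle_def P_def by (auto simp: not_less)
    then show False using dle_eq deg ne by metis
  qed
  then obtain p where p: "p \<in> P" by blast
  define M where "M = Min (\<omega> ` N)"
  have finN: "finite (\<omega> ` N)" by simp
  have hN: "M \<le> \<omega> v" if "v \<in> N" for v
    unfolding M_def using finN that by simp
  have hP: "\<omega> v < M" if "v \<in> P" for v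
  proof -
    have "\<omega> v < \<omega> s" if s: "s \<in> N" for s
    proof -
      have "\<not> \<omega> s < \<omega> v" using H \<open>v \<in> P\<close> s unfolding P_def N_def by blast
      moreover have "v \<noteq> s" using \<open>v \<in> P\<close> s unfolding P_def N_def by auto
      then have "\<omega> v \<noteq> \<omega> s" using inj by (auto dest: injD)
      ultimately show ?thesis by simp
    qed
    then show ?thesis unfolding M_def using finN \<open>N \<noteq> {}\<close> by (simp add: Min_gr_iff)
  qed
  define f where "f v = (int (Poly_Mapping.lookup a v) - int (Poly_Mapping.lookup b v)) * (int (\<omega> v) - int M)" for v
  have "(\<Sum>v\<in>(UNIV::'v set). f v) < (\<Sum>v\<in>(UNIV::'v set). 0)"
  proof (rule sum_strict_mono_ex1[where A = UNIV and f = f and g = "\<lambda>_. 0"])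
    show "\<forall>v\<in>UNIV. f v \<le> 0"
    proof
      fix v :: 'v
      consider "v \<in> P" | "v \<in> N" | "Poly_Mapping.lookup a v = Poly_Mapping.lookup b v"
        unfolding P_def N_def by fastforce
      then show "f v \<le> 0"
      proof cases
        case 1 then show ?thesis using hP[OF 1] unfolding f_def P_def
          by (simp add: mult_pos_neg less_imp_le)
      next
        case 2 then show ?thesis using hN[OF 2] unfolding f_def N_def
          by (simp add: mult_nonpos_nonneg)
      next
        case 3 then show ?thesis unfolding f_def by simp
      qed
    qed
    show "\<exists>v\<in>UNIV. f v < 0"
      using hP[OF p] p unfolding f_def P_def by (intro bexI[of _ p]) (simp_all add: mult_pos_neg)
  qed simp
  moreover have "(\<Sum>v\<in>UNIV. f v) = int (psi \<omega> a) - int (psi \<omega> b) - int M * (int (mdeg a) - int (mdeg b))"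
    by (simp add: f_def psi_def mdeg_UNIV algebra_simps sum_subtractf sum.distrib sum_distrib_left)
  ultimately show False using deg le by simp
qed



lemma pset_UNIV: "pset UNIV = UNIV" by (simp add: pset_def)

lemma pset_mono: "E \<subseteq> F \<Longrightarrow> pset E \<subseteq> pset F" by (auto simp: pset_def)

lemma vp_pset: "veronese_part c u = pset {m. mdeg m mod c = u}"
  by (auto simp: veronese_part_def pset_def)

lemma colon_pset:
  "{r \<in> pset D. r * mon b \<in> pset E} = (pset {w. w \<in> D \<and> w + b \<in> E} :: ('v, 'k::field) mpoly set)"
  by (auto simp: pset_def keys_mult_mon)

lemma inter_pset: "{r \<in> pset A. r \<in> pset B} = pset (A \<inter> B)"
  by (auto simp: pset_def)

lemma finite_deg: "finite {m :: 'v::finite \<Rightarrow>\<^sub>0 nat. mdeg m = u}"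
proof -
  have sub: "Poly_Mapping.lookup ` {m :: 'v \<Rightarrow>\<^sub>0 nat. mdeg m = u} \<subseteq> (\<Pi>\<^sub>E v\<in>UNIV. {..u})"
  proof
    fix f assume "f \<in> Poly_Mapping.lookup ` {m :: 'v \<Rightarrow>\<^sub>0 nat. mdeg m = u}"
    then obtain m :: "'v \<Rightarrow>\<^sub>0 nat" where m: "f = Poly_Mapping.lookup m" "mdeg m = u" by blast
    have "Poly_Mapping.lookup m v \<le> u" for v
      using member_le_sum[of v UNIV "Poly_Mapping.lookup m"] m(2) by (simp add: mdeg_UNIV)
    then show "f \<in> (\<Pi>\<^sub>E v\<in>UNIV. {..u})" using m(1) by (simp add: PiE_UNIV_domain)
  qed
  have "finite (\<Pi>\<^sub>E v\<in>(UNIV::'v set). {..u})" by (rule finite_PiE) auto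
  then have "finite (Poly_Mapping.lookup ` {m :: 'v \<Rightarrow>\<^sub>0 nat. mdeg m = u})" using sub finite_subset by blast
  moreover have "inj_on Poly_Mapping.lookup {m :: 'v \<Rightarrow>\<^sub>0 nat. mdeg m = u}"
    by (rule inj_onI) (simp add: poly_mapping_eqI)
  ultimately show ?thesis by (rule finite_imageD)
qed

lemma mod_sub_helper: "(x + u) mod c = (u::nat) \<Longrightarrow> x mod c = 0"
proof -
  assume h: "(x + u) mod c = u"
  have "x + u = c * ((x + u) div c) + u" using h div_mult_mod_eq[of "x + u" c] by (simp add: mult.commute)
  then have "x = c * ((x + u) div c)" by simp
  then show ?thesis by (metis mod_mult_self1_is_0)
qed

lemma deg_ge_c: "mdeg (w :: 'v::finite \<Rightarrow>\<^sub>0 nat) mod c = 0 \<Longrightarrow> w \<noteq> 0 \<Longrightarrow> c \<le> mdeg w"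
proof -
  assume a: "mdeg w mod c = 0" "w \<noteq> 0"
  then have "mdeg w > 0" using mdeg_eq_0 by blast
  then show ?thesis using a(1) by (simp add: dvd_imp_le mod_0_imp_dvd)
qed



theorem proposition3p18:
  fixes G :: "('v::finite \<Rightarrow>\<^sub>0 nat) set"
    and I :: "('v, 'k::field) mpoly set"
    and c d u :: nat
  assumes "\<forall>m\<in>G. mdeg m \<le> d"
    and "I = lin_span UNIV (mon ` G)"
    and "c \<ge> 1" and "c + 1 \<ge> d"
    and "u < c"
  shows "veronese_linear_quotients c u I"
proof -
  note Gdeg = assms(1) and cpos = assms(3) and cd = assms(4) and uc = assms(5)
  define IG where "IG = {k + g | k g. k \<in> (UNIV :: ('v \<Rightarrow>\<^sub>0 nat) set) \<and> g \<in> G}"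
  have hI: "I = pset IG"
    unfolding assms(2) IG_def using lin_span_pset[of UNIV G, where 'k='k] by (simp add: pset_UNIV)
  have IG_dle: "w \<in> IG" if "g \<in> G" "dle g w" for g w
    using that dle_diff[OF that(2)] unfolding IG_def by (metis (mono_tags, lifting) UNIV_I mem_Collect_eq)
  have IG_up: "w' \<in> IG" if "w \<in> IG" "dle w w'" for w w'
  proof -
    from that(1) obtain k g where kg: "w = k + g" "g \<in> G" unfolding IG_def by blast
    have "dle g w" unfolding kg by (metis add.commute dle_add)
    then show ?thesis using IG_dle[OF kg(2)] dle_trans that(2) by blast
  qed
  define D0 where "D0 = {k :: 'v \<Rightarrow>\<^sub>0 nat. mdeg k mod c = 0}"
  have D0_add: "k + k' \<in> D0" if "k \<in> D0" "k' \<in> D0" for k k'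
    using that unfolding D0_def by (simp add: mdeg_add mod_add_eq[symmetric])
  define Elin where "Elin B = {k + b | k b. k \<in> D0 \<and> b \<in> B}" for B
  have V0: "veronese_part c 0 = pset D0" unfolding vp_pset D0_def by simp
  have vsp: "vspan c I (mon ` B) = pset (Elin B \<union> IG)" for B
    unfolding vspan_def V0 lin_span_pset hI set_plus_pset Elin_def by simp
  have monI: "mon m \<in> I \<longleftrightarrow> m \<in> IG" for m unfolding hI pset_def by simp
  define Mu where "Mu = {m. mdeg m = u \<and> m \<notin> IG}"
  have finMu: "finite Mu" unfolding Mu_def using finite_deg[of u] by (rule rev_finite_subset) auto
  obtain \<omega> :: "'v \<Rightarrow> nat" where inj: "inj \<omega>"
    using finite_imp_inj_to_nat_seg[of "UNIV :: 'v set"] by auto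
  obtain xs where xs: "set xs = Mu" "distinct xs" using finite_distinct_list[OF finMu] by blast
  define key where "key m = - int (psi \<omega> m)" for m
  define bs where "bs = sort_key key xs"
  define ms :: "('v, 'k) mpoly list" where "ms = map mon bs"
  have bs_set: "set bs = Mu" unfolding bs_def using xs by simp
  have bs_dist: "distinct bs" unfolding bs_def using xs by simp
  have bs_sorted: "sorted (map key bs)" unfolding bs_def by simp
  have sortd: "psi \<omega> (bs ! i) \<le> psi \<omega> (bs ! j)" if "j \<le> i" "i < length bs" for i j
  proof -
    have "map key bs ! j \<le> map key bs ! i"
      using sorted_nth_mono[OF bs_sorted, of j i] that by simp
    then show ?thesis using that by (simp add: key_def)
  qed
  have earlier: "b' \<in> set (take i bs)" if "b' \<in> Mu" "psi \<omega> (bs ! i) < psi \<omega> b'" "i < length bs" for b' i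
  proof -
    from that(1) obtain j where j: "j < length bs" "b' = bs ! j" using bs_set by (metis in_set_conv_nth)
    have "j < i"
    proof (rule ccontr)
      assume "\<not> j < i"
      then have "psi \<omega> (bs ! j) \<le> psi \<omega> (bs ! i)" using sortd j(1) by simp
      then show False using that(2) j(2) by simp
    qed
    then show ?thesis using j that(3) by (auto simp: in_set_conv_nth intro!: exI[of _ j])
  qed
  have prev_idx: "\<exists>j<i. a = bs ! j" if "a \<in> set (take i bs)" for a i
    using that by (auto simp: in_set_conv_nth)
  have "minimal_hom_generators c u I ms"
    unfolding minimal_hom_generators_def
  proof (intro conjI)
    show "\<forall>g\<in>set ms. (\<exists>e. homogeneous e g) \<and> g \<in> veronese_part c u"
    proof
      fix g assume "g \<in> set ms"
      then obtain m where m: "m \<in> Mu" "g = mon m" unfolding ms_def using bs_set by auto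
      have "homogeneous u g" using m unfolding homogeneous_def Mu_def by simp
      moreover have "g \<in> veronese_part c u" using m uc unfolding veronese_part_def Mu_def by simp
      ultimately show "(\<exists>e. homogeneous e g) \<and> g \<in> veronese_part c u" by blast
    qed
  next
    have "set ms = mon ` Mu" unfolding ms_def using bs_set by simp
    then have vs: "vspan c I (set ms) = pset (Elin Mu \<union> IG)" using vsp by simp
    have "{m. mdeg m mod c = u} \<subseteq> Elin Mu \<union> IG"
    proof
      fix m :: "'v \<Rightarrow>\<^sub>0 nat" assume "m \<in> {m. mdeg m mod c = u}"
      then have mm: "mdeg m mod c = u" by simp
      then have "u \<le> mdeg m" using mod_less_eq_dividend[of "mdeg m" c] by simp
      then obtain b where b: "dle 0 b" "dle b m" "mdeg b = u"
        using exists_between[of 0 m u] by (auto simp: dle_def)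
      have eqm: "(m - b) + b = m" using dle_diff[OF b(2)] .
      have "mdeg (m - b) + u = mdeg m" using mdeg_add[of "m - b" b] eqm b(3) by simp
      then have "(m - b) \<in> D0" unfolding D0_def using mod_sub_helper[of "mdeg (m - b)" u c] mm by simp
      show "m \<in> Elin Mu \<union> IG"
      proof (cases "b \<in> IG")
        case True then show ?thesis using IG_up b(2) by blast
      next
        case False
        then have "b \<in> Mu" unfolding Mu_def using b(3) by simp
        then show ?thesis unfolding Elin_def using \<open>m - b \<in> D0\<close> eqm[symmetric] by blast
      qed
    qed
    then show "veronese_part c u \<subseteq> vspan c I (set ms)"
      unfolding vs vp_pset by (rule pset_mono)
  next
    show "\<forall>i<length ms. \<not> veronese_part c u \<subseteq> vspan c I {ms ! j |j. j < length ms \<and> j \<noteq> i}"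
    proof (intro allI impI)
      fix i assume i: "i < length ms"
      then have il: "i < length bs" unfolding ms_def by simp
      have "{ms ! j |j. j < length ms \<and> j \<noteq> i} = mon ` {bs ! j |j. j < length bs \<and> j \<noteq> i}"
        unfolding ms_def by (auto simp: image_def) (metis nth_map)
      then have vs: "vspan c I {ms ! j |j. j < length ms \<and> j \<noteq> i} = pset (Elin {bs ! j |j. j < length bs \<and> j \<noteq> i} \<union> IG)"
        using vsp by simp
      have bi: "bs ! i \<in> Mu" using il bs_set nth_mem by blast
      have "mon (bs ! i) \<in> veronese_part c u" using bi uc unfolding veronese_part_def Mu_def by simp
      moreover have "mon (bs ! i) \<notin> pset (Elin {bs ! j |j. j < length bs \<and> j \<noteq> i} \<union> IG)"
      proof
        assume "mon (bs ! i) \<in> pset (Elin {bs ! j |j. j < length bs \<and> j \<noteq> i} \<union> IG)"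
        then have "bs ! i \<in> Elin {bs ! j |j. j < length bs \<and> j \<noteq> i} \<union> IG" unfolding pset_def by simp
        moreover have "bs ! i \<notin> IG" using bi unfolding Mu_def by simp
        ultimately obtain k j where kj: "bs ! i = k + bs ! j" "j < length bs" "j \<noteq> i"
          unfolding Elin_def by blast
        have "bs ! j \<in> Mu" using kj(2) bs_set nth_mem by blast
        then have "mdeg k = 0" using kj(1) bi mdeg_add[of k "bs ! j"] unfolding Mu_def by simp
        then have "k = 0" by (rule mdeg_eq_0)
        then have "bs ! i = bs ! j" using kj(1) by simp
        then show False using bs_dist kj(2,3) il by (simp add: nth_eq_iff_index_eq)
      qed
      ultimately show "\<not> veronese_part c u \<subseteq> vspan c I {ms ! j |j. j < length ms \<and> j \<noteq> i}"
        unfolding vs by blast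
    qed
  qed
  moreover have "\<forall>i<length ms. \<exists>Y\<subseteq>Xset c I. colon_rep c I ms i = ideal_rep c I Y"
  proof (intro allI impI)
    fix i assume i: "i < length ms"
    then have il: "i < length bs" unfolding ms_def by simp
    define b where "b = bs ! i"
    define prev where "prev = set (take i bs)"
    have bMu: "b \<in> Mu" unfolding b_def using il bs_set nth_mem by blast
    define W where "W = {y. mdeg y = c \<and> y \<notin> IG \<and> y + b \<in> Elin prev \<union> IG}"
    have colon: "colon_rep c I ms i = pset {w. w \<in> D0 \<and> w + b \<in> Elin prev \<union> IG}"
    proof -
      have "ms ! i = mon b" unfolding ms_def b_def using il by simp
      moreover have "set (take i ms) = mon ` prev" unfolding ms_def prev_def by (simp add: take_map)
      ultimately have "colon_rep c I ms i = {r \<in> pset D0. r * mon b \<in> pset (Elin prev \<union> IG)}"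
        unfolding colon_rep_def V0 using vsp[of prev] by simp
      then show ?thesis using colon_pset[of D0 b "Elin prev \<union> IG", where 'k='k] by simp
    qed
    have ideal: "ideal_rep c I (mon ` W) = pset (D0 \<inter> (Elin W \<union> IG))"
      unfolding ideal_rep_def V0 vsp inter_pset ..
    have WX: "mon ` W \<subseteq> Xset c I" unfolding W_def Xset_def using monI by auto
    have key_eq: "{w. w \<in> D0 \<and> w + b \<in> Elin prev \<union> IG} = D0 \<inter> (Elin W \<union> IG)"
    proof (rule set_eqI, rule iffI)
      fix w assume "w \<in> D0 \<inter> (Elin W \<union> IG)"
      then have wD: "w \<in> D0" and wE: "w \<in> Elin W \<union> IG" by auto
      have "w + b \<in> Elin prev \<union> IG"
      proof (cases "w \<in> IG")
        case True
        then show ?thesis using IG_up dle_add[of w b] by blast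
      next
        case False
        then obtain k y where ky: "w = k + y" "k \<in> D0" "y \<in> W" using wE unfolding Elin_def by blast
        then have "y + b \<in> Elin prev \<union> IG" unfolding W_def by simp
        then show ?thesis
        proof
          assume "y + b \<in> IG"
          moreover have "dle (y + b) (w + b)" unfolding ky(1)
            using dle_add[of "y + b" k] by (simp add: ac_simps)
          ultimately show ?thesis using IG_up by blast
        next
          assume "y + b \<in> Elin prev"
          then obtain k' a where ka: "y + b = k' + a" "k' \<in> D0" "a \<in> prev" unfolding Elin_def by blast
          have "w + b = k + (y + b)" using ky(1) by (simp add: ac_simps)
          also have "\<dots> = (k + k') + a" by (simp only: ka(1) add.assoc)
          finally have "w + b = (k + k') + a" .
          moreover have "k + k' \<in> D0" using D0_add ky(2) ka(2) by blast
          ultimately show ?thesis unfolding Elin_def using ka(3) by blast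
        qed
      qed
      then show "w \<in> {w. w \<in> D0 \<and> w + b \<in> Elin prev \<union> IG}" using wD by simp
    next
      fix w assume "w \<in> {w. w \<in> D0 \<and> w + b \<in> Elin prev \<union> IG}"
      then have wD: "w \<in> D0" and wE: "w + b \<in> Elin prev \<union> IG" by auto
      have bnot: "b \<notin> IG" and bdeg: "mdeg b = u" using bMu unfolding Mu_def by auto
      have "w \<in> Elin W \<union> IG"
      proof (cases "w \<in> IG")
        case True then show ?thesis by blast
      next
        case wnot: False
        have wnz: "c \<le> mdeg w" if "w \<noteq> 0" using deg_ge_c[of w c] wD that unfolding D0_def by simp
        have finish: "w \<in> Elin W" if y: "dle y w" "mdeg y = c" "y + b \<in> Elin prev \<union> IG" for y
        proof -
          have "y \<notin> IG" using wnot IG_up y(1) by blast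
          then have yW: "y \<in> W" unfolding W_def using y by simp
          have eqw: "(w - y) + y = w" by (rule dle_diff[OF y(1)])
          have "mdeg (w - y) + c = mdeg w" using mdeg_add[of "w - y" y] eqw y(2) by simp
          then have "(mdeg (w - y) + c) mod c = 0" using wD unfolding D0_def by simp
          then have "w - y \<in> D0" unfolding D0_def by simp
          then show ?thesis unfolding Elin_def using yW eqw[symmetric] by blast
        qed
        from wE show ?thesis
        proof
          assume "w + b \<in> IG"
          then obtain k g where kg: "w + b = k + g" "g \<in> G" unfolding IG_def by blast
          have gle: "Poly_Mapping.lookup g v \<le> Poly_Mapping.lookup w v + Poly_Mapping.lookup b v" for v
            using arg_cong[OF kg(1), of "\<lambda>x. Poly_Mapping.lookup x v"] by (simp add: lookup_add)
          define h where "h = g - b"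
          have lh: "Poly_Mapping.lookup h v = Poly_Mapping.lookup g v - Poly_Mapping.lookup b v" for v
            unfolding h_def by (simp add: lookup_minus)
          have hw: "dle h w" unfolding dle_def lh using gle by (simp add: le_diff_conv)
          have hg: "dle h g" unfolding dle_def lh by simp
          have "h \<noteq> g"
          proof
            assume "h = g"
            then have "dle g w" using hw by simp
            then show False using wnot IG_dle kg(2) by blast
          qed
          then have "mdeg h < mdeg g" using dle_mdeg[OF hg] dle_eq[OF hg] by fastforce
          moreover have "mdeg g \<le> d" using Gdeg kg(2) by blast
          ultimately have hc: "mdeg h \<le> c" using cd by linarith
          have "h \<noteq> 0"
          proof
            assume "h = 0"
            then have "dle g b" unfolding dle_def using lh by (metis diff_is_0_eq lookup_zero)
            then show False using bnot IG_dle kg(2) by blast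
          qed
          then have "w \<noteq> 0" using hw unfolding dle_def by (metis le_zero_eq lookup_zero poly_mapping_eqI)
          then have "c \<le> mdeg w" by (rule wnz)
          then obtain y where y: "dle h y" "dle y w" "mdeg y = c" using exists_between[OF hw hc] by blast
          have "dle g (y + b)" unfolding dle_def
          proof
            fix v
            have "Poly_Mapping.lookup h v \<le> Poly_Mapping.lookup y v" using y(1) unfolding dle_def by blast
            then show "Poly_Mapping.lookup g v \<le> Poly_Mapping.lookup (y + b) v"
              unfolding lh by (simp add: lookup_add)
          qed
          then have "y + b \<in> IG" using IG_dle kg(2) by blast
          then show ?thesis using finish[OF y(2,3)] by blast
        next
          assume "w + b \<in> Elin prev"
          then obtain k a where ka: "w + b = k + a" "k \<in> D0" "a \<in> prev" unfolding Elin_def by blast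
          obtain j where j: "j < i" "a = bs ! j" using prev_idx ka(3) unfolding prev_def by blast
          have aMu: "a \<in> Mu" using j il bs_set nth_mem by (metis order.strict_trans)
          have "a \<noteq> b" using j il bs_dist unfolding b_def by (simp add: nth_eq_iff_index_eq)
          moreover have "psi \<omega> b \<le> psi \<omega> a" using sortd[of j i] j il unfolding b_def by simp
          moreover have "mdeg a = mdeg b" using aMu bdeg unfolding Mu_def by simp
          ultimately obtain t s where ts: "Poly_Mapping.lookup b t < Poly_Mapping.lookup a t"
            "Poly_Mapping.lookup a s < Poly_Mapping.lookup b s" "\<omega> s < \<omega> t"
            using key_exchange[OF inj] by blast
          have "Poly_Mapping.lookup a t \<le> Poly_Mapping.lookup w t + Poly_Mapping.lookup b t"
            using arg_cong[OF ka(1), of "\<lambda>x. Poly_Mapping.lookup x t"] by (simp add: lookup_add)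
          then have wt: "0 < Poly_Mapping.lookup w t" using ts(1) by linarith
          define h where "h = Poly_Mapping.single t (1::nat)"
          have hw: "dle h w" unfolding dle_def h_def using wt
            by (auto simp: lookup_single when_def)
          have "w \<noteq> 0" using wt by auto
          then have "c \<le> mdeg w" by (rule wnz)
          moreover have "mdeg h \<le> c" unfolding h_def mdeg_single using cpos .
          ultimately obtain y where y: "dle h y" "dle y w" "mdeg y = c" using exists_between[OF hw] by blast
          have yt: "1 \<le> Poly_Mapping.lookup y t" using y(1) unfolding dle_def h_def
            by (metis lookup_single_eq)
          define es where "es = Poly_Mapping.single s (1::nat)"
          define b0 where "b0 = b - es"
          have "dle es b" unfolding dle_def es_def using ts(2)
            by (auto simp: lookup_single when_def)
          then have bb0: "b0 + es = b" unfolding b0_def by (rule dle_diff)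
          define b' where "b' = b0 + h"
          have "mdeg b' = u" using bb0 bdeg unfolding b'_def h_def es_def
            by (metis mdeg_add mdeg_single)
          have psib': "psi \<omega> b < psi \<omega> b'"
          proof -
            have "psi \<omega> b = psi \<omega> b0 + \<omega> s" using bb0 unfolding es_def by (metis psi_add psi_single)
            moreover have "psi \<omega> b' = psi \<omega> b0 + \<omega> t" unfolding b'_def h_def by (metis psi_add psi_single)
            ultimately show ?thesis using ts(3) by simp
          qed
          have "dle b' (y + b)" unfolding dle_def
          proof
            fix v
            have "Poly_Mapping.lookup b0 v \<le> Poly_Mapping.lookup b v"
              using arg_cong[OF bb0, of "\<lambda>x. Poly_Mapping.lookup x v"] by (simp add: lookup_add)
            moreover have "Poly_Mapping.lookup h v \<le> Poly_Mapping.lookup y v"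
              using y(1) unfolding dle_def by blast
            ultimately show "Poly_Mapping.lookup b' v \<le> Poly_Mapping.lookup (y + b) v"
              unfolding b'_def by (simp add: lookup_add)
          qed
          have "y + b \<in> Elin prev \<union> IG"
          proof (cases "b' \<in> IG")
            case True
            then show ?thesis using IG_up \<open>dle b' (y + b)\<close> by blast
          next
            case False
            then have "b' \<in> Mu" unfolding Mu_def using \<open>mdeg b' = u\<close> by simp
            then have "b' \<in> prev" unfolding prev_def using earlier psib' il unfolding b_def by blast
            have eq: "(y + b - b') + b' = y + b" by (rule dle_diff[OF \<open>dle b' (y + b)\<close>])
            have "mdeg (y + b - b') + u = c + u"
              using mdeg_add[of "y + b - b'" b'] mdeg_add[of y b] eq y(3) bdeg \<open>mdeg b' = u\<close> by simp
            then have "y + b - b' \<in> D0" unfolding D0_def by simp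
            then show ?thesis unfolding Elin_def using \<open>b' \<in> prev\<close> eq[symmetric] by blast
          qed
          then show ?thesis using finish[OF y(2,3)] by blast
        qed
      qed
      then show "w \<in> D0 \<inter> (Elin W \<union> IG)" using wD by simp
    qed
    show "\<exists>Y\<subseteq>Xset c I. colon_rep c I ms i = ideal_rep c I Y"
    proof (intro exI conjI)
      show "mon ` W \<subseteq> Xset c I" by (rule WX)
      show "colon_rep c I ms i = ideal_rep c I (mon ` W)" unfolding colon ideal key_eq ..
    qed
  qed
  ultimately show ?thesis unfolding veronese_linear_quotients_def by blast
qed


end
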